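(* Let $|\phi_{\mathrm w}(\theta)\rangle$ be the 2-d Ising whip state on $\Lambda_L$ ($L\ge2$). Let $\mathcal B$ be the set of sites of $\Lambda_L$ having at least one coordinate in $\{0,L-1\}$, excluding $(0,0)$ and $(L-1,L-1)$, and $\hat T=\prod_{i\in\mathcal B}Z_i$. Then for all $\theta$ there is a phase $\phi\in\mathbb R$ with $$|\phi_{\mathrm w}(\theta+\pi)\rangle=e^{\mathrm i\phi}\,\hat T\,|\phi_{\mathrm w}(\theta)\rangle.$$ Moreover, with $\partial X=\sum_{i\in\mathcal B'}X_i$, $\mathcal B'=\{(L-1,b):0\le b\le L-2\}\cup\{(a,L-1):0\le a\le L-2\}\subseteq\mathcal B$, one has $\hat T\,\partial X=-\partial X\,\hat T$; in particular $\langle\partial X\rangle_{\theta+\pi}=-\langle\partial X\rangle_\theta$ while $\langle Z_iZ_j\rangle_{\theta+\pi}=\langle Z_iZ_j\rangle_\theta$ for all sites $i,j$.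
   Context: 2-d Ising whip circuit: for $L\ge2$, $\Lambda_L=\{0,\dots,L-1\}^2$, one qubit per site, $N=L^2$. Directed edges $(a,b)\to(a+1,b)$ and $(a,b)\to(a,b+1)$ whenever the target lies in $\Lambda_L$. $\deg^-(v)$ is the number of incoming edges of $v$. For each edge $u\to v$ let $G_{u\to v}(\theta)=\exp(-\mathrm i\,\theta\,Z_uY_v/\deg^-(v))$ with Pauli matrices $X,Y,Z$. The whip state is $|\phi_{\mathrm w}(\theta)\rangle=\prod G_{u\to v}(\theta)|+\rangle^{\otimes N}$, $|+\rangle=(|0\rangle+|1\rangle)/\sqrt2$, with gates applied in order of increasing $a+b$ of the target $v=(a,b)$. $\langle A\rangle_\theta=\langle\phi_{\mathrm w}(\theta)|A|\phi_{\mathrm w}(\theta)\rangle$. *)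

theory Defs
  imports Complex_Main
begin

text \<open>A computational basis configuration is the set of sites
  in state 1. A state vector is a function from configurations to amplitudes; all states
  considered are supported on configurations contained in the lattice.\<close>

type_synonym site = "nat \<times> nat"
type_synonym state = "site set \<Rightarrow> complex"
type_synonym op = "state \<Rightarrow> state"

definition sites :: "nat \<Rightarrow> site set" where
  "sites L = {0..<L} \<times> {0..<L}"

definition flip :: "site \<Rightarrow> site set \<Rightarrow> site set" where
  "flip u s = (if u \<in> s then s - {u} else insert u s)"

definition pauliZ :: "site \<Rightarrow> op" where
  "pauliZ u \<psi> = (\<lambda>s. (if u \<in> s then -1 else 1) * \<psi> s)"

definition pauliX :: "site \<Rightarrow> op" where
  "pauliX u \<psi> = (\<lambda>s. \<psi> (flip u s))"

text \<open>Y|0> = i|1>, Y|1> = -i|0>.\<close>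
definition pauliY :: "site \<Rightarrow> op" where
  "pauliY u \<psi> = (\<lambda>s. (if u \<in> s then \<i> else - \<i>) * \<psi> (flip u s))"

definition smult_op :: "complex \<Rightarrow> op \<Rightarrow> op" where
  "smult_op c A \<psi> = (\<lambda>s. c * A \<psi> s)"

definition op_exp :: "op \<Rightarrow> op" where
  "op_exp A \<psi> = (\<lambda>s. (\<Sum>n. ((A ^^ n) \<psi>) s / of_nat (fact n)))"

definition Zprod :: "site set \<Rightarrow> op" where
  "Zprod S \<psi> = (\<lambda>s. (\<Prod>i\<in>S. if i \<in> s then -1 else 1) * \<psi> s)"

definition indeg :: "site \<Rightarrow> nat" where
  "indeg v = (if fst v > 0 then 1 else 0) + (if snd v > 0 then 1 else 0)"

definition in_edges :: "site \<Rightarrow> (site \<times> site) list" where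
  "in_edges v = (case v of (a,b) \<Rightarrow>
      (if a > 0 then [((a-1,b),(a,b))] else []) @ (if b > 0 then [((a,b-1),(a,b))] else []))"

text \<open>All directed edges, listed by increasing level a+b of the target (level k = 1..2L-2).\<close>
definition edges :: "nat \<Rightarrow> (site \<times> site) list" where
  "edges L = concat (map (\<lambda>k. concat (map (\<lambda>a. in_edges (a, k - a))
                 (filter (\<lambda>a. a \<le> k \<and> k - a < L) [0..<L]))) [1..<2*L-1])"

definition gate :: "real \<Rightarrow> site \<times> site \<Rightarrow> op" where
  "gate \<theta> e = (case e of (u,v) \<Rightarrow>
      op_exp (smult_op (- \<i> * complex_of_real (\<theta> / real (indeg v))) (pauliZ u \<circ> pauliY v)))"

definition plus_state :: "nat \<Rightarrow> state" where
  "plus_state L = (\<lambda>s. if s \<subseteq> sites L then complex_of_real (1 / sqrt (2 ^ (L^2))) else 0)"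

text \<open>Gates applied in list order: the first edge of the list acts first.\<close>
definition whip :: "nat \<Rightarrow> real \<Rightarrow> state" where
  "whip L \<theta> = fold (\<lambda>e \<psi>. gate \<theta> e \<psi>) (edges L) (plus_state L)"

definition expect :: "nat \<Rightarrow> op \<Rightarrow> state \<Rightarrow> complex" where
  "expect L A \<psi> = (\<Sum>s\<in>Pow (sites L). cnj (\<psi> s) * A \<psi> s)"

definition bdry :: "nat \<Rightarrow> site set" where
  "bdry L = {v \<in> sites L. fst v \<in> {0, L-1} \<or> snd v \<in> {0, L-1}} - {(0,0), (L-1, L-1)}"

definition bdry' :: "nat \<Rightarrow> site set" where
  "bdry' L = {(L-1, b) | b. b \<le> L - 2} \<union> {(a, L-1) | a. a \<le> L - 2}"

definition Tz :: "nat \<Rightarrow> op" where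
  "Tz L = Zprod (bdry L)"

definition dX :: "nat \<Rightarrow> op" where
  "dX L \<psi> = (\<lambda>s. \<Sum>i\<in>bdry' L. pauliX i \<psi> s)"

end

theory Submission imports Defs begin

definition zz :: "site \<Rightarrow> site set \<Rightarrow> complex" where
  "zz w s = (if w \<in> s then -1 else 1)"
definition yy :: "site \<Rightarrow> site set \<Rightarrow> complex" where
  "yy v s = (if v \<in> s then \<i> else - \<i>)"

definition Gd :: "real \<Rightarrow> site \<Rightarrow> site \<Rightarrow> op" where
  "Gd \<alpha> u v \<psi> = (\<lambda>s. complex_of_real (cos \<alpha>) * \<psi> s
      - \<i> * complex_of_real (sin \<alpha>) * (zz u s * yy v s * \<psi> (flip v s)))"

lemma flip_flip[simp]: "flip v (flip v s) = s"
  unfolding flip_def by auto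
lemma mem_flip: "u \<in> flip v s \<longleftrightarrow> (if u = v then u \<notin> s else u \<in> s)"
  unfolding flip_def by auto
lemma zz_flip[simp]: "u \<noteq> v \<Longrightarrow> zz u (flip v s) = zz u s"
  unfolding zz_def by (simp add: mem_flip)
lemma yy_flip[simp]: "yy v (flip v s) * yy v s = 1" "yy v s * yy v (flip v s) = 1"
  unfolding yy_def by (auto simp: mem_flip)
lemma zz_sq[simp]: "zz u s * zz u s = 1"
  unfolding zz_def by auto

lemma ZY_eq: "(pauliZ u \<circ> pauliY v) \<psi> = (\<lambda>s. zz u s * yy v s * \<psi> (flip v s))"
  unfolding pauliZ_def pauliY_def zz_def yy_def by (auto simp: fun_eq_iff)

lemma ZY_eq2: "pauliZ u (pauliY v \<psi>) = (\<lambda>s. zz u s * yy v s * \<psi> (flip v s))"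
  using ZY_eq by simp

lemma pow_eq:
  assumes "u \<noteq> v"
  shows "((smult_op c (pauliZ u \<circ> pauliY v)) ^^ n) \<psi> =
    (\<lambda>s. c ^ n * (if even n then \<psi> s else zz u s * yy v s * \<psi> (flip v s)))"
proof (induction n)
  case 0 then show ?case by simp
next
  case (Suc n)
  show ?case
  proof (rule ext)
    fix s
    have "((smult_op c (pauliZ u \<circ> pauliY v)) ^^ Suc n) \<psi> s
       = c * (zz u s * yy v s * (c ^ n * (if even n then \<psi> (flip v s)
            else zz u s * yy v (flip v s) * \<psi> s)))"
    proof -
      have "((smult_op c (pauliZ u \<circ> pauliY v)) ^^ Suc n) \<psi> = smult_op c (pauliZ u \<circ> pauliY v) (((smult_op c (pauliZ u \<circ> pauliY v)) ^^ n) \<psi>)"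
        by simp
      also have "\<dots> = smult_op c (pauliZ u \<circ> pauliY v) (\<lambda>s. c ^ n * (if even n then \<psi> s else zz u s * yy v s * \<psi> (flip v s)))"
        by (simp only: Suc.IH)
      finally show ?thesis using assms by (simp add: smult_op_def ZY_eq2)
    qed
    also have "\<dots> = c ^ Suc n * (if even (Suc n) then \<psi> s else zz u s * yy v s * \<psi> (flip v s))"
    proof (cases "even n")
      case True then show ?thesis by (simp add: algebra_simps)
    next
      case False
      have h: "yy v s * (zz u s * (zz u s * yy v (flip v s))) = 1"
        by (simp add: zz_def yy_def mem_flip)
      show ?thesis using False h by (simp add: algebra_simps)
    qed
    finally show "((smult_op c (pauliZ u \<circ> pauliY v)) ^^ Suc n) \<psi> s = (\<lambda>s. c ^ Suc n * (if even (Suc n) then \<psi> s else zz u s * yy v s * \<psi> (flip v s))) s" by simp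
  qed
qed

lemma series_eq:
  fixes c a b :: complex
  shows "(\<lambda>n. c ^ n * (if even n then a else b) / of_nat (fact n)) sums
          ((exp c * (a + b) + exp (- c) * (a - b)) / 2)"
proof -
  have e1: "(\<lambda>n. c ^ n / fact n) sums exp c" using exp_converges[of c]
    by (simp add: scaleR_conv_of_real divide_inverse mult.commute)
  have e2: "(\<lambda>n. (-c) ^ n / fact n) sums exp (-c)" using exp_converges[of "-c"]
    by (simp add: scaleR_conv_of_real divide_inverse mult.commute)
  have "(\<lambda>n. (c ^ n / fact n * (a + b) + (-c) ^ n / fact n * (a - b)) / 2) sums
        ((exp c * (a + b) + exp (- c) * (a - b)) / 2)"
    by (intro sums_divide sums_add sums_mult2 e1 e2)
  moreover have "(\<lambda>n. (c ^ n / fact n * (a + b) + (-c) ^ n / fact n * (a - b)) / 2)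
      = (\<lambda>n. c ^ n * (if even n then a else b) / of_nat (fact n))"
  proof
    fix n
    show "(c ^ n / fact n * (a + b) + (-c) ^ n / fact n * (a - b)) / 2
      = c ^ n * (if even n then a else b) / of_nat (fact n)"
      by (cases "even n") (auto simp: field_simps)
  qed
  ultimately show ?thesis by simp
qed

lemma gate_eq:
  assumes "u \<noteq> v"
  shows "gate \<theta> (u, v) = Gd (\<theta> / real (indeg v)) u v"
proof (rule ext, rule ext)
  fix \<psi> s
  define \<alpha> where "\<alpha> = \<theta> / real (indeg v)"
  define c where "c = - \<i> * complex_of_real \<alpha>"
  have "gate \<theta> (u, v) \<psi> s = (\<Sum>n. c ^ n * (if even n then \<psi> s else zz u s * yy v s * \<psi> (flip v s)) / of_nat (fact n))"
    unfolding gate_def op_exp_def using pow_eq[OF assms] by (simp add: c_def \<alpha>_def)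
  also have "\<dots> = (exp c * (\<psi> s + zz u s * yy v s * \<psi> (flip v s)) + exp (- c) * (\<psi> s - zz u s * yy v s * \<psi> (flip v s))) / 2"
    by (rule sums_unique[symmetric], rule series_eq)
  also have "\<dots> = Gd \<alpha> u v \<psi> s"
  proof -
    have e1: "exp c = complex_of_real (cos \<alpha>) - \<i> * complex_of_real (sin \<alpha>)"
      using cis_conv_exp[of "-\<alpha>"] by (simp add: c_def cis.ctr complex_eq_iff)
    have e2: "exp (-c) = complex_of_real (cos \<alpha>) + \<i> * complex_of_real (sin \<alpha>)"
      using cis_conv_exp[of "\<alpha>"] by (simp add: c_def cis.ctr complex_eq_iff)
    show ?thesis unfolding Gd_def e1 e2 by (simp add: field_simps)
  qed
  finally show "gate \<theta> (u, v) \<psi> s = Gd (\<theta> / real (indeg v)) u v \<psi> s" by (simp add: \<alpha>_def)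
qed

definition blk :: "real \<Rightarrow> site \<Rightarrow> op" where
  "blk \<theta> v = fold (gate \<theta>) (in_edges v)"

definition fv :: "site \<Rightarrow> site set \<Rightarrow> complex" where
  "fv v s = (if fst v > 0 \<and> snd v > 0 then zz (fst v - 1, snd v) s * zz (fst v, snd v - 1) s else 1)"

lemma blk_cases:
  "a > 0 \<Longrightarrow> b > 0 \<Longrightarrow> blk \<theta> (a,b) \<psi> = Gd (\<theta>/2) (a, b-1) (a,b) (Gd (\<theta>/2) (a-1, b) (a,b) \<psi>)"
  "a > 0 \<Longrightarrow> blk \<theta> (a,0) \<psi> = Gd \<theta> (a-1, 0) (a,0) \<psi>"
  "b > 0 \<Longrightarrow> blk \<theta> (0,b) \<psi> = Gd \<theta> (0, b-1) (0,b) \<psi>"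
  by (auto simp: blk_def in_edges_def gate_eq indeg_def)

lemma Gd_comm: "(\<forall>s. \<sigma> (flip v s) = \<sigma> s) \<Longrightarrow> Gd \<alpha> u v (\<lambda>s. \<sigma> s * \<psi> s) = (\<lambda>s. \<sigma> s * Gd \<alpha> u v \<psi> s)"
  unfolding Gd_def by (auto simp: fun_eq_iff algebra_simps)

lemma blk_comm:
  assumes "\<forall>s. \<sigma> (flip v s) = \<sigma> s" "fst v > 0 \<or> snd v > 0"
  shows "blk \<theta> v (\<lambda>s. \<sigma> s * \<psi> s) = (\<lambda>s. \<sigma> s * blk \<theta> v \<psi> s)"
proof -
  obtain a b where v: "v = (a,b)" by force
  consider "a > 0" "b > 0" | "a > 0" "b = 0" | "a = 0" "b > 0" using assms(2) v by force
  then show ?thesis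
  proof cases
    case 1 then show ?thesis using assms(1) by (simp add: v blk_cases Gd_comm)
  next
    case 2 then show ?thesis using assms(1) by (simp add: v blk_cases Gd_comm)
  next
    case 3 then show ?thesis using assms(1) by (simp add: v blk_cases Gd_comm)
  qed
qed

lemma Gd_pi: "Gd (\<alpha> + pi) u v \<psi> = (\<lambda>s. - Gd \<alpha> u v \<psi> s)"
  unfolding Gd_def by (auto simp: fun_eq_iff algebra_simps)

lemma blk_sign:
  assumes "fst v > 0 \<or> snd v > 0"
  shows "blk (\<theta> + pi) v \<psi> = (\<lambda>s. - fv v s * blk \<theta> v \<psi> s)"
proof -
  obtain a b where v: "v = (a,b)" by force
  consider "a > 0" "b > 0" | "a > 0" "b = 0" | "a = 0" "b > 0" using assms v by force
  then show ?thesis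
  proof cases
    case 1
    have h: "(\<theta> + pi) / 2 = \<theta>/2 + pi/2" by simp
    show ?thesis
    proof (rule ext)
      fix s
      have ne1: "(a, b-1) \<noteq> (a,b)" "(a-1,b) \<noteq> (a,b)" "a - Suc 0 \<noteq> a" "b - Suc 0 \<noteq> b" using 1 by auto
      have yv: "yy (a,b) (flip (a,b) s) = - yy (a,b) s" by (simp add: yy_def mem_flip)
      show "blk (\<theta> + pi) v \<psi> s = - fv v s * blk \<theta> v \<psi> s"
        using 1 unfolding v blk_cases(1)[OF 1] h
        by (simp add: Gd_def fv_def ne1 cos_add sin_add algebra_simps zz_def yy_def mem_flip split: if_splits)
    qed
  next
    case 2 then show ?thesis by (simp add: v blk_cases Gd_pi fv_def)
  next
    case 3 then show ?thesis by (simp add: v blk_cases Gd_pi fv_def)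
  qed
qed

definition lev :: "site \<Rightarrow> nat" where "lev v = fst v + snd v"

lemma fv_flip: "lev v \<le> lev w \<Longrightarrow> fv v (flip w s) = fv v s"
  unfolding fv_def zz_def lev_def by (cases v; cases w) (auto simp: mem_flip)

lemma main_ind:
  assumes "sorted_wrt (\<lambda>v w. lev v \<le> lev w) ts" "\<forall>v\<in>set ts. fst v > 0 \<or> snd v > 0"
    "\<forall>v\<in>set ts. \<forall>s. \<sigma> (flip v s) = \<sigma> s"
  shows "fold (blk (\<theta> + pi)) ts (\<lambda>s. c * \<sigma> s * \<psi> s) =
     (\<lambda>s. c * (-1) ^ length ts * \<sigma> s * prod_list (map (\<lambda>v. fv v s) ts) * fold (blk \<theta>) ts \<psi> s)"
  using assms
proof (induction ts arbitrary: c \<sigma> \<psi>)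
  case Nil then show ?case by simp
next
  case (Cons v ts)
  have "blk (\<theta> + pi) v (\<lambda>s. c * \<sigma> s * \<psi> s) = (\<lambda>s. (c * \<sigma> s) * blk (\<theta> + pi) v \<psi> s)"
    using Cons.prems by (intro blk_comm) auto
  also have "\<dots> = (\<lambda>s. (- c) * (\<sigma> s * fv v s) * blk \<theta> v \<psi> s)"
  proof -
    have b: "blk (\<theta> + pi) v \<psi> = (\<lambda>s. - fv v s * blk \<theta> v \<psi> s)"
      using Cons.prems by (intro blk_sign) auto
    show ?thesis unfolding b by (simp add: fun_eq_iff algebra_simps)
  qed
  finally have step: "blk (\<theta> + pi) v (\<lambda>s. c * \<sigma> s * \<psi> s) = (\<lambda>s. (- c) * (\<sigma> s * fv v s) * blk \<theta> v \<psi> s)" .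
  have inv: "\<forall>w\<in>set ts. \<forall>s. \<sigma> (flip w s) * fv v (flip w s) = \<sigma> s * fv v s"
    using Cons.prems by (auto simp: fv_flip)
  have "fold (blk (\<theta> + pi)) (v # ts) (\<lambda>s. c * \<sigma> s * \<psi> s)
      = fold (blk (\<theta> + pi)) ts (\<lambda>s. (- c) * (\<sigma> s * fv v s) * blk \<theta> v \<psi> s)"
    by (simp add: step)
  also have "\<dots> = (\<lambda>s. (- c) * (-1) ^ length ts * (\<sigma> s * fv v s) * prod_list (map (\<lambda>v. fv v s) ts) * fold (blk \<theta>) ts (blk \<theta> v \<psi>) s)"
    using Cons.prems inv by (intro Cons.IH) auto
  finally show ?case by (simp add: fun_eq_iff algebra_simps)
qed

definition tgts :: "nat \<Rightarrow> site list" where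
  "tgts L = concat (map (\<lambda>k. map (\<lambda>a. (a, k - a)) (filter (\<lambda>a. a \<le> k \<and> k - a < L) [0..<L])) [1..<2*L-1])"

lemma concat_map_concat: "concat (map (\<lambda>k. concat (M k)) ks) = concat (concat (map M ks))"
  by (induction ks) auto

lemma edges_tgts: "edges L = concat (map in_edges (tgts L))"
  unfolding edges_def tgts_def by (simp add: map_concat comp_def concat_map_concat)

lemma fold_concat_map: "fold f (concat (map g xs)) a = fold (\<lambda>x. fold f (g x)) xs a"
  by (induction xs arbitrary: a) auto

lemma whip_eq: "whip L \<theta> = fold (blk \<theta>) (tgts L) (plus_state L)"
  unfolding whip_def edges_tgts fold_concat_map blk_def by simp

lemma sorted_const: "\<forall>x\<in>set xs. lev x = k \<Longrightarrow> sorted_wrt (\<lambda>v w. lev v \<le> lev w) xs"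
  by (induction xs) auto

lemma sorted_cc:
  assumes "\<And>k x. k \<in> set ks \<Longrightarrow> x \<in> set (g k) \<Longrightarrow> lev x = k" "sorted ks"
  shows "sorted_wrt (\<lambda>v w. lev v \<le> lev w) (concat (map g ks))"
  using assms
proof (induction ks)
  case Nil then show ?case by simp
next
  case (Cons k ks)
  have "sorted_wrt (\<lambda>v w. lev v \<le> lev w) (g k)" using Cons.prems by (intro sorted_const[where k=k]) auto
  moreover have "sorted_wrt (\<lambda>v w. lev v \<le> lev w) (concat (map g ks))" using Cons by auto
  moreover have "\<forall>x\<in>set (g k). \<forall>y\<in>set (concat (map g ks)). lev x \<le> lev y"
    using Cons.prems by fastforce
  ultimately show ?case by (simp add: sorted_wrt_append)
qed

lemma tgts_sorted: "sorted_wrt (\<lambda>v w. lev v \<le> lev w) (tgts L)"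
  unfolding tgts_def by (rule sorted_cc) (auto simp: lev_def)

lemma tgts_set: "set (tgts L) = sites L - {(0,0)}"
proof (rule set_eqI)
  fix v :: site
  obtain a b where v: "v = (a,b)" by force
  show "v \<in> set (tgts L) \<longleftrightarrow> v \<in> sites L - {(0,0)}"
  proof
    assume "v \<in> set (tgts L)"
    then show "v \<in> sites L - {(0,0)}" unfolding tgts_def sites_def v by auto
  next
    assume h: "v \<in> sites L - {(0,0)}"
    then have "a < L" "b < L" "a + b \<ge> 1" unfolding sites_def v by auto
    then have "a + b \<in> set [1..<2*L-1]" "a \<in> set (filter (\<lambda>x. x \<le> a + b \<and> a + b - x < L) [0..<L])"
      by auto
    then have "(a, (a+b) - a) \<in> set (map (\<lambda>x. (x, (a+b) - x)) (filter (\<lambda>x. x \<le> a + b \<and> a + b - x < L) [0..<L]))"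
      by (metis (no_types, lifting) image_eqI list.set_map)
    then show "v \<in> set (tgts L)" unfolding tgts_def v set_concat set_map
      using \<open>a + b \<in> set [1..<2*L-1]\<close> by auto
  qed
qed

lemma distinct_cc:
  assumes "\<And>k x. k \<in> set ks \<Longrightarrow> x \<in> set (g k) \<Longrightarrow> lev x = k" "distinct ks"
    "\<And>k. k \<in> set ks \<Longrightarrow> distinct (g k)"
  shows "distinct (concat (map g ks))"
  using assms
proof (induction ks)
  case Nil then show ?case by simp
next
  case (Cons k ks)
  have "set (g k) \<inter> set (concat (map g ks)) = {}"
  proof (rule ccontr)
    assume "set (g k) \<inter> set (concat (map g ks)) \<noteq> {}"
    then obtain x k' where "x \<in> set (g k)" "k' \<in> set ks" "x \<in> set (g k')" by auto
    then have "lev x = k" "lev x = k'" using Cons.prems(1) by auto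
    then show False using \<open>k' \<in> set ks\<close> Cons.prems(2) by auto
  qed
  then show ?case using Cons by auto
qed

lemma tgts_distinct: "distinct (tgts L)"
  unfolding tgts_def by (rule distinct_cc) (auto simp: lev_def distinct_map inj_on_def)

lemma prod_symdiff:
  fixes z :: "'a \<Rightarrow> complex"
  assumes "finite A" "finite B" "\<And>x. z x * z x = 1"
  shows "prod z A * prod z B = prod z ((A - B) \<union> (B - A))"
proof -
  have "prod z A = prod z (A \<inter> B) * prod z (A - B)" using prod.Int_Diff[OF assms(1)] .
  moreover have "prod z B = prod z (A \<inter> B) * prod z (B - A)"
    using prod.Int_Diff[OF assms(2), of z A] by (simp add: Int_commute)
  moreover have "prod z (A \<inter> B) * prod z (A \<inter> B) = 1"
    by (simp add: assms(3) flip: prod.distrib)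
  moreover have "prod z ((A - B) \<union> (B - A)) = prod z (A - B) * prod z (B - A)"
    using assms by (intro prod.union_disjoint) auto
  ultimately show ?thesis by (simp add: algebra_simps)
qed

lemma bdry_eq:
  assumes "L \<ge> 2"
  shows "(({0..<L-1} \<times> {1..<L}) - ({1..<L} \<times> {0..<L-1})) \<union> (({1..<L} \<times> {0..<L-1}) - ({0..<L-1} \<times> {1..<L})) = bdry L"
  using assms unfolding bdry_def sites_def by auto

lemma prod_tgts:
  assumes "L \<ge> 2"
  shows "prod_list (map (\<lambda>v. fv v s) (tgts L)) = (\<Prod>i\<in>bdry L. zz i s)"
proof -
  define I where "I = {1..<L} \<times> {1..<L}"
  define R1 where "R1 = {0..<L-1} \<times> {1..<L}"
  define R2 where "R2 = {1..<L} \<times> {0..<L-1}"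
  have "prod_list (map (\<lambda>v. fv v s) (tgts L)) = (\<Prod>v\<in>set (tgts L). fv v s)"
    by (simp add: prod.distinct_set_conv_list tgts_distinct)
  also have "\<dots> = (\<Prod>v\<in>I. fv v s)"
    unfolding tgts_set
    by (rule prod.mono_neutral_right) (auto simp: I_def sites_def fv_def)
  also have "\<dots> = (\<Prod>v\<in>I. zz (fst v - 1, snd v) s) * (\<Prod>v\<in>I. zz (fst v, snd v - 1) s)"
    by (simp add: I_def flip: prod.distrib, rule prod.cong) (auto simp: fv_def)
  also have "(\<Prod>v\<in>I. zz (fst v - 1, snd v) s) = (\<Prod>v\<in>R1. zz v s)"
  proof -
    have im: "(\<lambda>v. (fst v - 1, snd v)) ` I = R1"
    proof
      show "(\<lambda>v. (fst v - 1, snd v)) ` I \<subseteq> R1" unfolding I_def R1_def by auto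
      show "R1 \<subseteq> (\<lambda>v. (fst v - 1, snd v)) ` I"
      proof
        fix x assume "x \<in> R1"
        then obtain a b where "x = (a,b)" "a < L - 1" "1 \<le> b" "b < L" unfolding R1_def by auto
        then show "x \<in> (\<lambda>v. (fst v - 1, snd v)) ` I"
          unfolding I_def by (intro rev_image_eqI[of "(a+1,b)"]) auto
      qed
    qed
    have inj: "inj_on (\<lambda>v. (fst v - 1, snd v)) I"
      unfolding I_def inj_on_def by auto
    show ?thesis unfolding im[symmetric] prod.reindex[OF inj] by (simp add: comp_def)
  qed
  also have "(\<Prod>v\<in>I. zz (fst v, snd v - 1) s) = (\<Prod>v\<in>R2. zz v s)"
  proof -
    have im: "(\<lambda>v. (fst v, snd v - 1)) ` I = R2"
    proof
      show "(\<lambda>v. (fst v, snd v - 1)) ` I \<subseteq> R2" unfolding I_def R2_def by auto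
      show "R2 \<subseteq> (\<lambda>v. (fst v, snd v - 1)) ` I"
      proof
        fix x assume "x \<in> R2"
        then obtain a b where "x = (a,b)" "b < L - 1" "1 \<le> a" "a < L" unfolding R2_def by auto
        then show "x \<in> (\<lambda>v. (fst v, snd v - 1)) ` I"
          unfolding I_def by (intro rev_image_eqI[of "(a,b+1)"]) auto
      qed
    qed
    have inj: "inj_on (\<lambda>v. (fst v, snd v - 1)) I"
      unfolding I_def inj_on_def by auto
    show ?thesis unfolding im[symmetric] prod.reindex[OF inj] by (simp add: comp_def)
  qed
  also have "(\<Prod>v\<in>R1. zz v s) * (\<Prod>v\<in>R2. zz v s) = (\<Prod>v\<in>(R1 - R2) \<union> (R2 - R1). zz v s)"
    by (rule prod_symdiff) (auto simp: R1_def R2_def)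
  also have "(R1 - R2) \<union> (R2 - R1) = bdry L"
    unfolding R1_def R2_def by (rule bdry_eq[OF assms])
  finally show ?thesis .
qed

definition tt :: "nat \<Rightarrow> site set \<Rightarrow> complex" where
  "tt L s = (\<Prod>i\<in>bdry L. zz i s)"

lemma whip_pi:
  assumes "L \<ge> 2"
  shows "whip L (\<theta> + pi) = (\<lambda>s. (-1) ^ length (tgts L) * tt L s * whip L \<theta> s)"
proof -
  have h: "plus_state L = (\<lambda>s. 1 * (\<lambda>_. 1) s * plus_state L s)" by simp
  have "whip L (\<theta> + pi) = fold (blk (\<theta> + pi)) (tgts L) (\<lambda>s. 1 * (\<lambda>_. 1) s * plus_state L s)"
    unfolding whip_eq by (subst h) (rule refl)
  also have "\<dots> = (\<lambda>s. 1 * (-1) ^ length (tgts L) * (\<lambda>_. 1) s * prod_list (map (\<lambda>v. fv v s) (tgts L)) * fold (blk \<theta>) (tgts L) (plus_state L) s)"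
    by (rule main_ind) (auto simp: tgts_sorted tgts_set sites_def)
  finally show ?thesis by (simp add: prod_tgts[OF assms] tt_def whip_eq)
qed

lemma finite_bdry: "finite (bdry L)"
  unfolding bdry_def sites_def by (rule finite_subset[of _ "{0..<L} \<times> {0..<L}"]) auto

lemma tt_flip: "i \<in> bdry L \<Longrightarrow> tt L (flip i s) = - tt L s"
proof -
  assume i: "i \<in> bdry L"
  have "tt L (flip i s) = zz i (flip i s) * (\<Prod>j\<in>bdry L - {i}. zz j (flip i s))"
    unfolding tt_def using i finite_bdry by (simp add: prod.remove)
  also have "(\<Prod>j\<in>bdry L - {i}. zz j (flip i s)) = (\<Prod>j\<in>bdry L - {i}. zz j s)"
    by (rule prod.cong) auto
  also have "zz i (flip i s) = - zz i s" by (simp add: zz_def mem_flip)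
  finally show ?thesis unfolding tt_def using i finite_bdry by (simp add: prod.remove)
qed

lemma tt_sq: "tt L s * tt L s = 1"
  unfolding tt_def by (simp flip: prod.distrib)

lemma tt_cnj: "cnj (tt L s) = tt L s"
  unfolding tt_def zz_def cnj_prod by (rule prod.cong) auto

lemma bdry'_sub: "L \<ge> 2 \<Longrightarrow> bdry' L \<subseteq> bdry L"
  unfolding bdry'_def bdry_def sites_def by auto

lemma Tz_eq: "Tz L \<psi> = (\<lambda>s. tt L s * \<psi> s)"
  unfolding Tz_def Zprod_def tt_def zz_def by simp

theorem mainTheorem11:
  fixes L :: nat
  assumes "L \<ge> 2"
  shows "(\<forall>\<theta>::real. \<exists>\<phi>::real.
            whip L (\<theta> + pi) = smult_op (exp (\<i> * complex_of_real \<phi>)) (Tz L) (whip L \<theta>))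
       \<and> bdry' L \<subseteq> bdry L
       \<and> Tz L \<circ> dX L = smult_op (-1) (dX L \<circ> Tz L)
       \<and> (\<forall>\<theta>::real. expect L (dX L) (whip L (\<theta> + pi)) = - expect L (dX L) (whip L \<theta>))
       \<and> (\<forall>\<theta>::real. \<forall>i\<in>sites L. \<forall>j\<in>sites L.
            expect L (pauliZ i \<circ> pauliZ j) (whip L (\<theta> + pi))
              = expect L (pauliZ i \<circ> pauliZ j) (whip L \<theta>))"
proof (intro conjI allI ballI)
  define n where "n = length (tgts L)"
  define c :: complex where "c = (-1) ^ n"
  have wp: "\<And>\<theta>. whip L (\<theta> + pi) = (\<lambda>s. c * tt L s * whip L \<theta> s)"
    unfolding c_def n_def using whip_pi[OF assms] .
  have cc: "c * c = 1" "cnj c = c" unfolding c_def by (simp_all flip: power_mult_distrib)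
  have sub: "bdry' L \<subseteq> bdry L" using bdry'_sub[OF assms] .
  show "bdry' L \<subseteq> bdry L" by (rule sub)
  fix \<theta> :: real
  show "\<exists>\<phi>::real. whip L (\<theta> + pi) = smult_op (exp (\<i> * complex_of_real \<phi>)) (Tz L) (whip L \<theta>)"
  proof (intro exI)
    have "exp (\<i> * complex_of_real (if even n then 0 else pi)) = c"
      unfolding c_def by auto
    then show "whip L (\<theta> + pi) = smult_op (exp (\<i> * complex_of_real (if even n then 0 else pi))) (Tz L) (whip L \<theta>)"
      unfolding wp smult_op_def Tz_eq by (simp add: mult.assoc)
  qed
next
  have sub: "bdry' L \<subseteq> bdry L" using bdry'_sub[OF assms] .
  show "Tz L \<circ> dX L = smult_op (-1) (dX L \<circ> Tz L)"
  proof (rule ext, rule ext)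
    fix \<psi> s
    have "(\<Sum>i\<in>bdry' L. tt L (flip i s) * \<psi> (flip i s)) = (\<Sum>i\<in>bdry' L. - (tt L s * \<psi> (flip i s)))"
      by (rule sum.cong) (use sub tt_flip in auto)
    then show "(Tz L \<circ> dX L) \<psi> s = smult_op (-1) (dX L \<circ> Tz L) \<psi> s"
      by (simp add: Tz_eq dX_def pauliX_def smult_op_def sum_distrib_left sum_negf)
  qed
next
  define n where "n = length (tgts L)"
  define c :: complex where "c = (-1) ^ n"
  have wp: "\<And>\<theta>. whip L (\<theta> + pi) = (\<lambda>s. c * tt L s * whip L \<theta> s)"
    unfolding c_def n_def using whip_pi[OF assms] .
  have cc: "c * c = 1" "cnj c = c" unfolding c_def by (simp_all flip: power_mult_distrib)
  have sub: "bdry' L \<subseteq> bdry L" using bdry'_sub[OF assms] .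
  fix \<theta> :: real
  let ?w = "whip L \<theta>"
  have "expect L (dX L) (whip L (\<theta> + pi)) = (\<Sum>s\<in>Pow (sites L). - (cnj (?w s) * (\<Sum>i\<in>bdry' L. ?w (flip i s))))"
    unfolding expect_def
  proof (rule sum.cong[OF refl])
    fix s
    have "(\<Sum>i\<in>bdry' L. c * tt L (flip i s) * ?w (flip i s)) = (\<Sum>i\<in>bdry' L. - (c * tt L s) * ?w (flip i s))"
      by (rule sum.cong) (use sub tt_flip in auto)
    also have "\<dots> = - (c * tt L s) * (\<Sum>i\<in>bdry' L. ?w (flip i s))"
      by (simp add: sum_distrib_left)
    finally have e: "(\<Sum>i\<in>bdry' L. c * tt L (flip i s) * ?w (flip i s)) = - (c * tt L s) * (\<Sum>i\<in>bdry' L. ?w (flip i s))" .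
    have "cnj (whip L (\<theta> + pi) s) * dX L (whip L (\<theta> + pi)) s
        = (c * tt L s * cnj (?w s)) * (- (c * tt L s) * (\<Sum>i\<in>bdry' L. ?w (flip i s)))"
      unfolding wp dX_def pauliX_def by (simp add: cc tt_cnj e)
    also have "\<dots> = - ((c * c) * (tt L s * tt L s) * (cnj (?w s) * (\<Sum>i\<in>bdry' L. ?w (flip i s))))"
      by (simp add: algebra_simps)
    finally show "cnj (whip L (\<theta> + pi) s) * dX L (whip L (\<theta> + pi)) s = - (cnj (?w s) * (\<Sum>i\<in>bdry' L. ?w (flip i s)))"
      by (simp add: cc tt_sq)
  qed
  also have "\<dots> = - expect L (dX L) ?w"
    unfolding expect_def dX_def pauliX_def by (simp add: sum_negf)
  finally show "expect L (dX L) (whip L (\<theta> + pi)) = - expect L (dX L) (whip L \<theta>)" .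
next
  define n where "n = length (tgts L)"
  define c :: complex where "c = (-1) ^ n"
  have wp: "\<And>\<theta>. whip L (\<theta> + pi) = (\<lambda>s. c * tt L s * whip L \<theta> s)"
    unfolding c_def n_def using whip_pi[OF assms] .
  have cc: "c * c = 1" "cnj c = c" unfolding c_def by (simp_all flip: power_mult_distrib)
  fix \<theta> :: real and i j
  let ?w = "whip L \<theta>"
  show "expect L (pauliZ i \<circ> pauliZ j) (whip L (\<theta> + pi)) = expect L (pauliZ i \<circ> pauliZ j) ?w"
    unfolding expect_def
  proof (rule sum.cong[OF refl])
    fix s
    have "cnj (whip L (\<theta> + pi) s) * (pauliZ i \<circ> pauliZ j) (whip L (\<theta> + pi)) s
       = (c * c) * (tt L s * tt L s) * (cnj (?w s) * (pauliZ i \<circ> pauliZ j) ?w s)"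
      unfolding wp by (simp add: cc tt_cnj pauliZ_def algebra_simps)
    then show "cnj (whip L (\<theta> + pi) s) * (pauliZ i \<circ> pauliZ j) (whip L (\<theta> + pi)) s
       = cnj (?w s) * (pauliZ i \<circ> pauliZ j) ?w s" by (simp add: cc tt_sq)
  qed
qed

end
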